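(* Let $\mathbb{F}$ be a field and let $G$ be a finite absolutely irreducible subgroup of $\mathrm{GL}(n,\mathbb{F})$ that is self-normalizing in $\mathrm{GL}(n,\mathbb{F})$ modulo scalars (i.e., $N_{\mathrm{GL}(n,\mathbb{F})}(G)=G\cdot Z$ where $Z$ is the group of scalar matrices). If $G$ has precisely $|\mathrm{Out}(G)|$ inequivalent faithful absolutely irreducible representations in $\mathrm{GL}(n,\mathbb{F})$, then every absolutely irreducible subgroup of $\mathrm{GL}(n,\mathbb{F})$ isomorphic to $G$ is $\mathrm{GL}(n,\mathbb{F})$-conjugate to $G$. *)

theory Defs
  imports "HOL-Algebra.Algebraic_Closure_Type" "Jordan_Normal_Form.Matrix"
begin

definition GL :: "nat \<Rightarrow> 'a::field mat set" where
  "GL n = {A \<in> carrier_mat n n. invertible_mat A}"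

definition is_inv_mat :: "nat \<Rightarrow> 'a::field mat \<Rightarrow> 'a mat \<Rightarrow> bool" where
  "is_inv_mat n A B \<longleftrightarrow> A \<in> carrier_mat n n \<and> B \<in> carrier_mat n n \<and>
     A * B = 1\<^sub>m n \<and> B * A = 1\<^sub>m n"

definition subgroup_GL :: "nat \<Rightarrow> 'a::field mat set \<Rightarrow> bool" where
  "subgroup_GL n H \<longleftrightarrow> H \<subseteq> GL n \<and> 1\<^sub>m n \<in> H \<and>
     (\<forall>A\<in>H. \<forall>B\<in>H. A * B \<in> H) \<and>
     (\<forall>A\<in>H. \<exists>B\<in>H. is_inv_mat n A B)"

definition subspace_vec :: "nat \<Rightarrow> 'a::field vec set \<Rightarrow> bool" where
  "subspace_vec n W \<longleftrightarrow> W \<subseteq> carrier_vec n \<and> 0\<^sub>v n \<in> W \<and>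
     (\<forall>v\<in>W. \<forall>w\<in>W. v + w \<in> W) \<and> (\<forall>c. \<forall>v\<in>W. c \<cdot>\<^sub>v v \<in> W)"

definition irreducible_mats :: "nat \<Rightarrow> 'a::field mat set \<Rightarrow> bool" where
  "irreducible_mats n H \<longleftrightarrow> n > 0 \<and>
     (\<forall>W. subspace_vec n W \<and> (\<forall>A\<in>H. \<forall>v\<in>W. A *\<^sub>v v \<in> W) \<longrightarrow>
          W = {0\<^sub>v n} \<or> W = carrier_vec n)"

definition abs_irreducible :: "nat \<Rightarrow> 'a::field mat set \<Rightarrow> bool" where
  "abs_irreducible n H \<longleftrightarrow> irreducible_mats n (map_mat to_ac ` H)"

definition mat_group_hom :: "'a::field mat set \<Rightarrow> 'b::field mat set \<Rightarrow> ('a mat \<Rightarrow> 'b mat) \<Rightarrow> bool" where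
  "mat_group_hom G H f \<longleftrightarrow> (\<forall>x\<in>G. f x \<in> H) \<and> (\<forall>x\<in>G. \<forall>y\<in>G. f (x * y) = f x * f y)"

definition mat_group_iso :: "'a::field mat set \<Rightarrow> 'b::field mat set \<Rightarrow> ('a mat \<Rightarrow> 'b mat) \<Rightarrow> bool" where
  "mat_group_iso G H f \<longleftrightarrow> mat_group_hom G H f \<and> bij_betw f G H"

text \<open>Aut(G), Inn(G) and Out(G) = Aut(G)/Inn(G) (cosets f Inn(G)).\<close>
definition Aut :: "'a::field mat set \<Rightarrow> ('a mat \<Rightarrow> 'a mat) set" where
  "Aut G = {f. f \<in> extensional G \<and> mat_group_iso G G f}"

definition Inn :: "nat \<Rightarrow> 'a::field mat set \<Rightarrow> ('a mat \<Rightarrow> 'a mat) set" where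
  "Inn n G = {(\<lambda>x\<in>G. g * x * h) | g h. g \<in> G \<and> h \<in> G \<and> is_inv_mat n g h}"

definition Out :: "nat \<Rightarrow> 'a::field mat set \<Rightarrow> ('a mat \<Rightarrow> 'a mat) set set" where
  "Out n G = (\<lambda>f. (\<lambda>i. compose G f i) ` Inn n G) ` Aut G"

definition scalars :: "nat \<Rightarrow> 'a::field mat set" where
  "scalars n = {c \<cdot>\<^sub>m 1\<^sub>m n | c. c \<noteq> 0}"

definition conj_set :: "nat \<Rightarrow> 'a::field mat \<Rightarrow> 'a mat set \<Rightarrow> 'a mat set" where
  "conj_set n P G = {P * g * Q | g Q. g \<in> G \<and> is_inv_mat n P Q}"

definition normaliser_GL :: "nat \<Rightarrow> 'a::field mat set \<Rightarrow> 'a mat set" where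
  "normaliser_GL n G = {P \<in> GL n. conj_set n P G = G}"

definition set_prod_mat :: "'a::field mat set \<Rightarrow> 'a mat set \<Rightarrow> 'a mat set" where
  "set_prod_mat A B = {a * b | a b. a \<in> A \<and> b \<in> B}"

definition faithful_abs_irr_reps :: "nat \<Rightarrow> 'a::field mat set \<Rightarrow> ('a mat \<Rightarrow> 'a mat) set" where
  "faithful_abs_irr_reps n G = {\<rho>. \<rho> \<in> extensional G \<and> mat_group_hom G (GL n) \<rho> \<and>
      inj_on \<rho> G \<and> abs_irreducible n (\<rho> ` G)}"

definition equiv_reps :: "nat \<Rightarrow> 'a::field mat set \<Rightarrow> (('a mat \<Rightarrow> 'a mat) \<times> ('a mat \<Rightarrow> 'a mat)) set" where
  "equiv_reps n G = {(\<rho>, \<sigma>). \<rho> \<in> faithful_abs_irr_reps n G \<and> \<sigma> \<in> faithful_abs_irr_reps n G \<and>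
      (\<exists>P Q. is_inv_mat n P Q \<and> (\<forall>g\<in>G. \<sigma> g = P * \<rho> g * Q))}"

end

theory Submission
  imports Defs
begin

lemma sg_carrier:
  assumes "subgroup_GL n G" "A \<in> G" shows "A \<in> carrier_mat n n"
  using assms unfolding subgroup_GL_def GL_def by auto

lemma inv_unique:
  assumes "is_inv_mat n P Q" "is_inv_mat n P Q'" shows "Q' = Q"
proof -
  have c: "P \<in> carrier_mat n n" "Q \<in> carrier_mat n n" "Q' \<in> carrier_mat n n"
    "P * Q = 1\<^sub>m n" "Q' * P = 1\<^sub>m n" using assms unfolding is_inv_mat_def by auto
  have "Q' = Q' * (P * Q)" using c(3,4) by (simp add: right_mult_one_mat)
  also have "\<dots> = (Q' * P) * Q" using assoc_mult_mat[OF c(3,1,2)] by simp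
  also have "\<dots> = Q" using c(2,5) by (simp add: left_mult_one_mat)
  finally show ?thesis .
qed

lemma conj_set_eq:
  assumes "is_inv_mat n P Q" shows "conj_set n P G = (\<lambda>g. P * g * Q) ` G"
  unfolding conj_set_def using inv_unique[OF assms] assms by blast

lemma inv_GL:
  assumes "is_inv_mat n P Q" shows "P \<in> GL n"
  using assms unfolding is_inv_mat_def GL_def invertible_mat_def inverts_mat_def square_mat.simps
  by auto

lemma Aut_image: "\<alpha> \<in> Aut G \<Longrightarrow> \<alpha> ` G = G"
  unfolding Aut_def mat_group_iso_def by (auto dest: bij_betw_imp_surj_on)

lemma Aut_in_F:
  assumes "subgroup_GL n G" "abs_irreducible n G" "\<alpha> \<in> Aut G"
  shows "\<alpha> \<in> faithful_abs_irr_reps n G"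
  using assms Aut_image[OF assms(3)]
  unfolding faithful_abs_irr_reps_def Aut_def mat_group_iso_def mat_group_hom_def subgroup_GL_def
  by (auto dest: bij_betw_imp_inj_on)

lemma E_refl:
  assumes "subgroup_GL n G" "\<rho> \<in> faithful_abs_irr_reps n G"
  shows "(\<rho>, \<rho>) \<in> equiv_reps n G"
proof -
  have "is_inv_mat n (1\<^sub>m n) (1\<^sub>m n)" unfolding is_inv_mat_def by auto
  moreover have "\<forall>g\<in>G. \<rho> g = 1\<^sub>m n * \<rho> g * 1\<^sub>m n"
  proof
    fix g assume "g \<in> G"
    then have "\<rho> g \<in> carrier_mat n n" using assms
      unfolding faithful_abs_irr_reps_def mat_group_hom_def GL_def by auto
    then show "\<rho> g = 1\<^sub>m n * \<rho> g * 1\<^sub>m n" by simp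
  qed
  ultimately show ?thesis using assms unfolding equiv_reps_def by blast
qed

lemma hom_one:
  assumes sg: "subgroup_GL n G" and b: "\<beta> \<in> Aut G"
  shows "\<beta> (1\<^sub>m n) = 1\<^sub>m n"
proof -
  have h: "\<forall>x\<in>G. \<beta> x \<in> G" "\<forall>x\<in>G. \<forall>y\<in>G. \<beta> (x * y) = \<beta> x * \<beta> y"
    using b unfolding Aut_def mat_group_iso_def mat_group_hom_def by auto
  have one: "1\<^sub>m n \<in> G" using sg unfolding subgroup_GL_def by auto
  then have b1: "\<beta> (1\<^sub>m n) \<in> G" using h by auto
  then obtain B where B: "B \<in> G" "is_inv_mat n (\<beta> (1\<^sub>m n)) B"
    using sg unfolding subgroup_GL_def by auto
  have c: "\<beta> (1\<^sub>m n) \<in> carrier_mat n n" "B \<in> carrier_mat n n"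
    using sg_carrier[OF sg] B b1 by auto
  have bb: "\<beta> (1\<^sub>m n) * \<beta> (1\<^sub>m n) = \<beta> (1\<^sub>m n)"
    using h(2) one by (metis left_mult_one_mat' index_one_mat(2))
  have "1\<^sub>m n = \<beta> (1\<^sub>m n) * B" using B unfolding is_inv_mat_def by auto
  also have "\<dots> = (\<beta> (1\<^sub>m n) * \<beta> (1\<^sub>m n)) * B" using bb by simp
  also have "\<dots> = \<beta> (1\<^sub>m n) * (\<beta> (1\<^sub>m n) * B)" using c by simp
  also have "\<dots> = \<beta> (1\<^sub>m n)" using B c unfolding is_inv_mat_def by simp
  finally show ?thesis by simp
qed

lemma assocn: "A \<in> carrier_mat n n \<Longrightarrow> B \<in> carrier_mat n n \<Longrightarrow> C \<in> carrier_mat n n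
  \<Longrightarrow> A * B * C = A * (B * C)" by simp

lemma multn: "A \<in> carrier_mat n n \<Longrightarrow> B \<in> carrier_mat n n \<Longrightarrow> A * B \<in> carrier_mat n n"
  by simp

lemma key:
  assumes sg: "subgroup_GL n G"
    and norm: "normaliser_GL n G = set_prod_mat G (scalars n)"
    and a: "\<alpha> \<in> Aut G" and b: "\<beta> \<in> Aut G"
    and inv: "is_inv_mat n P Q" and eq: "\<forall>g\<in>G. \<alpha> g = P * \<beta> g * Q"
  shows "(\<lambda>i. compose G \<alpha> i) ` Inn n G \<subseteq> (\<lambda>i. compose G \<beta> i) ` Inn n G"
proof -
  have car: "\<And>A. A \<in> G \<Longrightarrow> A \<in> carrier_mat n n" using sg_carrier[OF sg] .
  have clos: "\<And>A B. A \<in> G \<Longrightarrow> B \<in> G \<Longrightarrow> A * B \<in> G" using sg unfolding subgroup_GL_def by auto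
  have hb: "\<forall>x\<in>G. \<beta> x \<in> G" "\<forall>x\<in>G. \<forall>y\<in>G. \<beta> (x * y) = \<beta> x * \<beta> y"
    using b unfolding Aut_def mat_group_iso_def mat_group_hom_def by auto
  have PQ: "P \<in> carrier_mat n n" "Q \<in> carrier_mat n n" "P * Q = 1\<^sub>m n" "Q * P = 1\<^sub>m n"
    using inv unfolding is_inv_mat_def by auto
  have bG: "\<beta> ` G = G" and aG: "\<alpha> ` G = G" using Aut_image a b by auto
  have "conj_set n P G = (\<lambda>g. P * g * Q) ` G" using conj_set_eq[OF inv] .
  also have "\<dots> = (\<lambda>g. P * g * Q) ` (\<beta> ` G)" using bG by simp
  also have "\<dots> = \<alpha> ` G" using eq by (auto simp: image_image)
  finally have "conj_set n P G = G" using aG by simp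
  then have "P \<in> normaliser_GL n G" using inv_GL[OF inv] unfolding normaliser_GL_def by auto
  then obtain k c where k: "k \<in> G" "c \<noteq> 0" "P = k * (c \<cdot>\<^sub>m 1\<^sub>m n)"
    unfolding norm set_prod_mat_def scalars_def by auto
  have kc: "k \<in> carrier_mat n n" using car k by auto
  have Pc: "P = c \<cdot>\<^sub>m k" using k(3) mult_smult_distrib[OF kc, of "1\<^sub>m n" n c] kc
    by (simp add: right_mult_one_mat)
  obtain k0 where k0: "k0 \<in> G" "\<beta> k0 = k" using k(1) bG by (metis imageE)
  obtain k0' where k0': "k0' \<in> G" "is_inv_mat n k0 k0'" using k0(1) sg unfolding subgroup_GL_def by auto
  have k0i: "k0 * k0' = 1\<^sub>m n" "k0' * k0 = 1\<^sub>m n" using k0' unfolding is_inv_mat_def by auto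
  have b1: "\<beta> (1\<^sub>m n) = 1\<^sub>m n" using hom_one[OF sg b] .
  have bk0'c: "\<beta> k0' \<in> carrier_mat n n" using hb k0' car by auto
  have bk0': "\<beta> k0' = c \<cdot>\<^sub>m Q"
  proof -
    have "\<beta> k0' = \<beta> k0' * (P * Q)" using PQ bk0'c by (simp add: right_mult_one_mat)
    also have "\<dots> = \<beta> k0' * ((c \<cdot>\<^sub>m k) * Q)" using Pc by simp
    also have "\<dots> = c \<cdot>\<^sub>m ((\<beta> k0' * k) * Q)"
      using bk0'c kc PQ mult_smult_distrib[OF bk0'c mult_carrier_mat[OF kc PQ(2)]]
      by (simp add: mult_smult_assoc_mat)
    also have "\<beta> k0' * k = 1\<^sub>m n" using hb k0 k0' k0i b1 by metis
    finally show ?thesis using PQ by (simp add: left_mult_one_mat)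
  qed
  have conj: "\<alpha> x = \<beta> (k0 * x * k0')" if x: "x \<in> G" for x
  proof -
    have bx: "\<beta> x \<in> carrier_mat n n" using hb x car by auto
    have "\<alpha> x = (c \<cdot>\<^sub>m k) * \<beta> x * Q" using eq x Pc by simp
    also have "\<dots> = k * \<beta> x * (c \<cdot>\<^sub>m Q)"
      using kc bx PQ mult_smult_distrib[OF mult_carrier_mat[OF kc bx] PQ(2)]
        mult_smult_assoc_mat[OF mult_carrier_mat[OF kc bx] PQ(2)]
        mult_smult_assoc_mat[OF kc bx]
      by simp
    also have "\<dots> = \<beta> (k0 * x * k0')" using hb k0 k0' x clos bk0' by metis
    finally show ?thesis .
  qed
  show ?thesis
  proof
    fix F assume "F \<in> (\<lambda>i. compose G \<alpha> i) ` Inn n G"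
    then obtain g h where gh: "g \<in> G" "h \<in> G" "is_inv_mat n g h"
      and F: "F = compose G \<alpha> (\<lambda>x\<in>G. g * x * h)"
      unfolding Inn_def by auto
    have ghi: "g * h = 1\<^sub>m n" "h * g = 1\<^sub>m n" using gh unfolding is_inv_mat_def by auto
    have cs: "g \<in> carrier_mat n n" "h \<in> carrier_mat n n" "k0 \<in> carrier_mat n n" "k0' \<in> carrier_mat n n"
      using car gh k0 k0' by auto
    have inv2: "is_inv_mat n (k0 * g) (h * k0')"
    proof -
      have "k0 * g * (h * k0') = k0 * (g * h) * k0'" using cs by (simp add: assocn multn)
      also have "\<dots> = 1\<^sub>m n" using ghi k0i cs by simp
      finally have 1: "k0 * g * (h * k0') = 1\<^sub>m n" .
      have "h * k0' * (k0 * g) = h * (k0' * k0) * g" using cs by (simp add: assocn multn)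
      also have "\<dots> = 1\<^sub>m n" using ghi k0i cs by simp
      finally have 2: "h * k0' * (k0 * g) = 1\<^sub>m n" .
      show ?thesis using 1 2 cs unfolding is_inv_mat_def by auto
    qed
    have jI: "(\<lambda>x\<in>G. (k0 * g) * x * (h * k0')) \<in> Inn n G"
      unfolding Inn_def using inv2 clos gh k0 k0' by blast
    have "F = compose G \<beta> (\<lambda>x\<in>G. (k0 * g) * x * (h * k0'))"
    proof
      fix x show "F x = compose G \<beta> (\<lambda>x\<in>G. (k0 * g) * x * (h * k0')) x"
      proof (cases "x \<in> G")
        case True
        have xc: "x \<in> carrier_mat n n" using car True by auto
        have "g * x * h \<in> G" using clos gh True by auto
        then have "F x = \<beta> (k0 * (g * x * h) * k0')" using F conj True by (simp add: compose_def)
        also have "k0 * (g * x * h) * k0' = (k0 * g) * x * (h * k0')" using cs xc by (simp add: assocn multn)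
        finally show ?thesis using True by (simp add: compose_def)
      next
        case False then show ?thesis using F by (simp add: compose_def)
      qed
    qed
    then show "F \<in> (\<lambda>i. compose G \<beta> i) ` Inn n G" using jI by blast
  qed
qed

theorem corollary11p2:
  fixes G :: "'a::field mat set" and n :: nat
  assumes "subgroup_GL n G" and "finite G"
    and "abs_irreducible n G"
    and "normaliser_GL n G = set_prod_mat G (scalars n)"
    and "finite (faithful_abs_irr_reps n G // equiv_reps n G)"
    and "card (faithful_abs_irr_reps n G // equiv_reps n G) = card (Out n G)"
  shows "\<forall>H. subgroup_GL n H \<and> abs_irreducible n H \<and> (\<exists>f. mat_group_iso G H f)
           \<longrightarrow> (\<exists>P \<in> GL n. conj_set n P G = H)"
proof -
  note sg = assms(1) and ai = assms(3) and norm = assms(4)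
  define F where "F = faithful_abs_irr_reps n G"
  define E where "E = equiv_reps n G"
  define C where "C = (\<lambda>f::'a mat \<Rightarrow> 'a mat. (\<lambda>i. compose G f i) ` Inn n G)"
  define \<Phi> where "\<Phi> = (\<lambda>x. E `` {x})"
  have OutC: "Out n G = C ` Aut G" unfolding Out_def C_def by simp
  have EF: "(x, y) \<in> E \<Longrightarrow> y \<in> F" for x y unfolding E_def F_def equiv_reps_def by auto
  have PhiC: "C \<alpha> = C \<beta>" if a: "\<alpha> \<in> Aut G" and b: "\<beta> \<in> Aut G" and eq: "\<Phi> \<alpha> = \<Phi> \<beta>" for \<alpha> \<beta>
  proof -
    have aF: "\<alpha> \<in> faithful_abs_irr_reps n G" by (rule Aut_in_F[OF sg ai a])
    have bF: "\<beta> \<in> faithful_abs_irr_reps n G" by (rule Aut_in_F[OF sg ai b])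
    have aa: "(\<alpha>, \<alpha>) \<in> E" unfolding E_def by (rule E_refl[OF sg aF])
    have bb: "(\<beta>, \<beta>) \<in> E" unfolding E_def by (rule E_refl[OF sg bF])
    have "\<alpha> \<in> \<Phi> \<beta>" using aa eq unfolding \<Phi>_def by (metis Image_singleton_iff)
    then have ba: "(\<beta>, \<alpha>) \<in> E" unfolding \<Phi>_def by simp
    have "\<beta> \<in> \<Phi> \<alpha>" using bb eq unfolding \<Phi>_def by (metis Image_singleton_iff)
    then have ab: "(\<alpha>, \<beta>) \<in> E" unfolding \<Phi>_def by simp
    from ba obtain P Q where 1: "is_inv_mat n P Q" "\<forall>g\<in>G. \<alpha> g = P * \<beta> g * Q"
      unfolding E_def equiv_reps_def by blast
    from ab obtain P' Q' where 2: "is_inv_mat n P' Q'" "\<forall>g\<in>G. \<beta> g = P' * \<alpha> g * Q'"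
      unfolding E_def equiv_reps_def by blast
    have "C \<alpha> \<subseteq> C \<beta>" unfolding C_def by (rule key[OF sg norm a b 1])
    moreover have "C \<beta> \<subseteq> C \<alpha>" unfolding C_def by (rule key[OF sg norm b a 2])
    ultimately show ?thesis by (rule subset_antisym)
  qed
  define gg where "gg = (\<lambda>Y0. C (SOME \<alpha>. \<alpha> \<in> Aut G \<and> \<Phi> \<alpha> = Y0))"
  have "C \<alpha> = gg (\<Phi> \<alpha>)" if "\<alpha> \<in> Aut G" for \<alpha>
  proof -
    have "\<exists>\<beta>. \<beta> \<in> Aut G \<and> \<Phi> \<beta> = \<Phi> \<alpha>" using that by blast
    then have "(SOME \<beta>. \<beta> \<in> Aut G \<and> \<Phi> \<beta> = \<Phi> \<alpha>) \<in> Aut G \<and>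
       \<Phi> (SOME \<beta>. \<beta> \<in> Aut G \<and> \<Phi> \<beta> = \<Phi> \<alpha>) = \<Phi> \<alpha>" by (rule someI_ex)
    then have "C (SOME \<beta>. \<beta> \<in> Aut G \<and> \<Phi> \<beta> = \<Phi> \<alpha>) = C \<alpha>"
      using PhiC that by blast
    then show ?thesis unfolding gg_def by simp
  qed
  then have "Out n G = gg ` \<Phi> ` Aut G" unfolding OutC by (auto simp: image_image)
  have sub: "\<Phi> ` Aut G \<subseteq> F // E"
    using Aut_in_F[OF sg ai] unfolding \<Phi>_def quotient_def F_def by blast
  have fin: "finite (F // E)" using assms(5) unfolding F_def E_def .
  have "card (Out n G) \<le> card (\<Phi> ` Aut G)"
    using \<open>Out n G = gg ` \<Phi> ` Aut G\<close> card_image_le[OF finite_subset[OF sub fin], of gg] by simp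
  moreover have "card (F // E) = card (Out n G)" using assms(6) unfolding F_def E_def .
  ultimately have surj: "\<Phi> ` Aut G = F // E"
    using card_seteq[OF fin sub] by simp
  show ?thesis
  proof (intro allI impI)
    fix H :: "'a mat set"
    assume "subgroup_GL n H \<and> abs_irreducible n H \<and> (\<exists>f. mat_group_iso G H f)"
    then obtain f where H: "subgroup_GL n H" "abs_irreducible n H" "mat_group_iso G H f" by blast
    define \<rho> where "\<rho> = restrict f G"
    have fH: "f ` G = H" using H(3) unfolding mat_group_iso_def by (auto dest: bij_betw_imp_surj_on)
    have rG: "\<rho> ` G = H" using fH unfolding \<rho>_def by auto
    have "\<rho> \<in> F" unfolding F_def faithful_abs_irr_reps_def
    proof (intro CollectI conjI)
      show "\<rho> \<in> extensional G" unfolding \<rho>_def by simp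
      show "mat_group_hom G (GL n) \<rho>" using sg H(1,3) unfolding \<rho>_def mat_group_iso_def mat_group_hom_def subgroup_GL_def
        by auto
      show "inj_on \<rho> G" using H(3) unfolding \<rho>_def mat_group_iso_def bij_betw_def inj_on_def by auto
      show "abs_irreducible n (\<rho> ` G)" using rG H(2) by simp
    qed
    then have "\<Phi> \<rho> \<in> F // E" unfolding \<Phi>_def quotient_def by blast
    then obtain \<alpha> where a: "\<alpha> \<in> Aut G" "\<Phi> \<rho> = \<Phi> \<alpha>" using surj by (metis imageE)
    have "(\<rho>, \<rho>) \<in> E" using E_refl[OF sg] \<open>\<rho> \<in> F\<close> unfolding E_def F_def by auto
    then have "(\<alpha>, \<rho>) \<in> E" using a unfolding \<Phi>_def by blast
    then obtain P Q where PQ: "is_inv_mat n P Q" "\<forall>g\<in>G. \<rho> g = P * \<alpha> g * Q"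
      unfolding E_def equiv_reps_def by auto
    have "conj_set n P G = (\<lambda>g. P * g * Q) ` G" using conj_set_eq[OF PQ(1)] .
    also have "\<dots> = (\<lambda>g. P * g * Q) ` (\<alpha> ` G)" using Aut_image[OF a(1)] by simp
    also have "\<dots> = \<rho> ` G" using PQ(2) by (auto simp: image_image)
    finally have "conj_set n P G = H" using rG by simp
    then show "\<exists>P \<in> GL n. conj_set n P G = H" using inv_GL[OF PQ(1)] by blast
  qed
qed

end
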